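(* Let $\Gamma=(V,E,\varphi)$ be an oriented hypergraph with adjacency matrix $A\neq \mathbf 0$, strong coloring number $\chi(\Gamma)$, and smallest and largest normalized Laplacian eigenvalues $\lambda_1$ and $\lambda_N$. Then $\lambda_1<1<\lambda_N$ and \[ \chi(\Gamma)\;\geq\;\frac{\lambda_N-\lambda_1}{\min\{\lambda_N-1,\;1-\lambda_1\}} . \] (If instead $A=\mathbf 0$, then $\lambda_1=\lambda_N=1$, the right-hand side is interpreted as $1$ by convention, and the inequality is trivial.)
   Context: An oriented hypergraph $\Gamma=(V,E,\varphi)$ consists of a finite vertex set $V$ with $|V|=N$, an edge set $E\subseteq\mathcal P(V)$, and a function $\varphi\colon V\times E\to\{-1,0,1\}$ with $\varphi(v,e)\neq 0$ iff $v\in e$. Two vertices $v,w\in e$ are co-oriented in $e$ if $\varphi(v,e)=\varphi(w,e)$ and anti-oriented in $e$ if $\varphi(v,e)=-\varphi(w,e)$. The degree is $\deg v=|\{e\in E: v\in e\}|$; we assume every vertex has degree at least $1$, and $D=\mathrm{diag}(\deg v)_{v\in V}$. The adjacency matrix $A$ is the $N\times N$ matrix with $A_{v,v}=0$ and, for $v\neq w$, $A_{v,w}=(\#\text{edges in which } v,w \text{ are anti-oriented})-(\#\text{edges in which } v,w \text{ are co-oriented})$. The normalized Laplacian is $L=\mathrm{Id}-D^{-1}A$ (equivalently $D^{-1}\mathcal I\mathcal I^\top$ with incidence matrix $\mathcal I_{v,e}=\varphi(v,e)$); it is self-adjoint for $\langle f,g\rangle=\sum_{v}\deg v\, f(v)g(v)$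 on functions $V\to\mathbb R$, and its (real) eigenvalues are $\lambda_1\le\dots\le\lambda_N$. A proper strong $k$-coloring is a map $V\to\{1,\dots,k\}$ such that any two distinct vertices lying in a common edge receive different colors; $\chi(\Gamma)$ is the least $k$ for which one exists. *)

theory Defs
  imports Complex_Main
begin

text \<open>We also include the standing assumption that every vertex has degree at least 1.\<close>

definition deg :: "'a set set \<Rightarrow> 'a \<Rightarrow> nat" where
  "deg E v = card {e \<in> E. v \<in> e}"

definition oriented_hypergraph :: "'a set \<Rightarrow> 'a set set \<Rightarrow> ('a \<Rightarrow> 'a set \<Rightarrow> int) \<Rightarrow> bool" where
  "oriented_hypergraph V E phi \<longleftrightarrow>
     finite V \<and> E \<subseteq> Pow V \<and>
     (\<forall>v\<in>V. \<forall>e\<in>E. phi v e \<in> {-1, 0, 1} \<and> (phi v e \<noteq> 0 \<longleftrightarrow> v \<in> e)) \<and>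
     (\<forall>v\<in>V. deg E v \<ge> 1)"

definition adj :: "'a set set \<Rightarrow> ('a \<Rightarrow> 'a set \<Rightarrow> int) \<Rightarrow> 'a \<Rightarrow> 'a \<Rightarrow> int" where
  "adj E phi v w =
     (if v = w then 0 else
        int (card {e \<in> E. v \<in> e \<and> w \<in> e \<and> phi v e = - phi w e})
      - int (card {e \<in> E. v \<in> e \<and> w \<in> e \<and> phi v e = phi w e}))"

definition norm_laplacian ::
  "'a set \<Rightarrow> 'a set set \<Rightarrow> ('a \<Rightarrow> 'a set \<Rightarrow> int) \<Rightarrow> ('a \<Rightarrow> real) \<Rightarrow> 'a \<Rightarrow> real" where
  "norm_laplacian V E phi f v =
     f v - (1 / real (deg E v)) * (\<Sum>w\<in>V. real_of_int (adj E phi v w) * f w)"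

definition laplacian_eigenvalues :: "'a set \<Rightarrow> 'a set set \<Rightarrow> ('a \<Rightarrow> 'a set \<Rightarrow> int) \<Rightarrow> real set" where
  "laplacian_eigenvalues V E phi =
     {\<mu>. \<exists>f. (\<exists>v\<in>V. f v \<noteq> 0) \<and> (\<forall>v\<in>V. norm_laplacian V E phi f v = \<mu> * f v)}"

definition lambda_min :: "'a set \<Rightarrow> 'a set set \<Rightarrow> ('a \<Rightarrow> 'a set \<Rightarrow> int) \<Rightarrow> real" where
  "lambda_min V E phi = Min (laplacian_eigenvalues V E phi)"

definition lambda_max :: "'a set \<Rightarrow> 'a set set \<Rightarrow> ('a \<Rightarrow> 'a set \<Rightarrow> int) \<Rightarrow> real" where
  "lambda_max V E phi = Max (laplacian_eigenvalues V E phi)"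

definition strong_coloring :: "'a set \<Rightarrow> 'a set set \<Rightarrow> nat \<Rightarrow> ('a \<Rightarrow> nat) \<Rightarrow> bool" where
  "strong_coloring V E k c \<longleftrightarrow>
     (\<forall>v\<in>V. c v \<in> {1..k}) \<and>
     (\<forall>e\<in>E. \<forall>v\<in>e. \<forall>w\<in>e. v \<noteq> w \<longrightarrow> c v \<noteq> c w)"

definition chromatic_number :: "'a set \<Rightarrow> 'a set set \<Rightarrow> nat" where
  "chromatic_number V E = (LEAST k. \<exists>c. strong_coloring V E k c)"

end

theory Submission imports Defs "HOL-Analysis.Analysis" "HOL-Library.Function_Algebras"
begin

lemma compact_box_fun:
  fixes V :: "'a set"
  shows "compact (Pi UNIV (\<lambda>v. if v \<in> V then {-1..1::real} else {0}))"
proof -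
  have "compactin (product_topology (\<lambda>i. euclidean) UNIV) (PiE UNIV (\<lambda>v. if v \<in> V then {-1..1::real} else {0}))"
    by (subst compactin_PiE) auto
  then show ?thesis by (simp add: euclidean_product_topology PiE_UNIV_domain)
qed

lemma cont_eval [continuous_intros]: "continuous_on S (\<lambda>z::'a \<Rightarrow> real. z v)"
  by (rule continuous_on_subset[OF continuous_on_product_coordinates subset_UNIV])

lemma quad_zero:
  fixes X Y :: real
  assumes "\<And>t. 0 \<le> 2*t*X + t^2*Y"
  shows "X = 0"
proof (rule ccontr)
  assume X: "X \<noteq> 0"
  show False
  proof (cases "Y \<le> 0")
    case True
    have "0 \<le> 2*(-X)*X + (-X)^2*Y" by (rule assms)
    moreover have "(-X)^2*Y \<le> 0" using True by (simp add: mult_nonneg_nonpos)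
    moreover have "X*X > 0" using X by (simp add: power2_eq_square[symmetric])
    ultimately show False by (simp add: power2_eq_square)
  next
    case False
    have "0 \<le> 2*(-X/Y)*X + (-X/Y)^2*Y" by (rule assms)
    also have "\<dots> = -(X*X)/Y" using False by (simp add: power2_eq_square field_simps)
    also have "\<dots> < 0" using X False by (auto intro!: divide_pos_pos simp: power2_eq_square[symmetric])
    finally show False by simp
  qed
qed

lemma double_sum_ident:
  fixes a bb :: "nat \<Rightarrow> real"
  assumes "finite I"
  shows "(\<Sum>i\<in>I. \<Sum>j\<in>I. (a i - a j) * (bb i - bb j))
    = 2 * real (card I) * (\<Sum>i\<in>I. a i * bb i) - 2 * (\<Sum>i\<in>I. a i) * (\<Sum>i\<in>I. bb i)"
proof -
  have sw: "(\<Sum>i\<in>I. \<Sum>j\<in>I. a j * bb i) = (\<Sum>i\<in>I. \<Sum>j\<in>I. a i * bb j)" by (rule sum.swap)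
  have "(\<Sum>i\<in>I. \<Sum>j\<in>I. (a i - a j) * (bb i - bb j)) =
     (\<Sum>i\<in>I. \<Sum>j\<in>I. a i * bb i) + (\<Sum>i\<in>I. \<Sum>j\<in>I. a j * bb j) - (\<Sum>i\<in>I. \<Sum>j\<in>I. a i * bb j) - (\<Sum>i\<in>I. \<Sum>j\<in>I. a j * bb i)"
    by (simp add: sum.distrib sum_subtractf algebra_simps)
  also have "\<dots> = 2 * real (card I) * (\<Sum>i\<in>I. a i * bb i) - 2 * (\<Sum>i\<in>I. \<Sum>j\<in>I. a i * bb j)"
  proof -
    have h1: "(\<Sum>i\<in>I. \<Sum>j\<in>I. a i * bb i) = real (card I) * (\<Sum>i\<in>I. a i * bb i)"
      by (simp add: sum_distrib_left)
    have h2: "(\<Sum>i\<in>I. \<Sum>j\<in>I. a j * bb j) = real (card I) * (\<Sum>i\<in>I. a i * bb i)"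
      by simp
    show ?thesis unfolding sw h1 h2 by simp
  qed
  also have "(\<Sum>i\<in>I. \<Sum>j\<in>I. a i * bb j) = (\<Sum>i\<in>I. a i) * (\<Sum>i\<in>I. bb i)"
    by (simp add: sum_product)
  finally show ?thesis by simp
qed

lemma swap4:
  "(\<Sum>i\<in>I. \<Sum>j\<in>J. \<Sum>v\<in>V. \<Sum>w\<in>W. G i j v w) = (\<Sum>v\<in>V. \<Sum>w\<in>W. \<Sum>i\<in>I. \<Sum>j\<in>J. (G i j v w :: real))"
proof -
  have "(\<Sum>i\<in>I. \<Sum>j\<in>J. \<Sum>v\<in>V. \<Sum>w\<in>W. G i j v w) = (\<Sum>i\<in>I. \<Sum>v\<in>V. \<Sum>j\<in>J. \<Sum>w\<in>W. G i j v w)"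
    by (rule sum.cong[OF refl], rule sum.swap)
  also have "\<dots> = (\<Sum>i\<in>I. \<Sum>v\<in>V. \<Sum>w\<in>W. \<Sum>j\<in>J. G i j v w)"
    by (rule sum.cong[OF refl], rule sum.cong[OF refl], rule sum.swap)
  also have "\<dots> = (\<Sum>v\<in>V. \<Sum>i\<in>I. \<Sum>w\<in>W. \<Sum>j\<in>J. G i j v w)"
    by (rule sum.swap)
  also have "\<dots> = (\<Sum>v\<in>V. \<Sum>w\<in>W. \<Sum>i\<in>I. \<Sum>j\<in>J. G i j v w)"
    by (rule sum.cong[OF refl], rule sum.swap)
  finally show ?thesis .
qed

lemma swap3:
  "(\<Sum>i\<in>I. \<Sum>j\<in>J. \<Sum>v\<in>V. G i j v) = (\<Sum>v\<in>V. \<Sum>i\<in>I. \<Sum>j\<in>J. (G i j v :: real))"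
proof -
  have "(\<Sum>i\<in>I. \<Sum>j\<in>J. \<Sum>v\<in>V. G i j v) = (\<Sum>i\<in>I. \<Sum>v\<in>V. \<Sum>j\<in>J. G i j v)"
    by (rule sum.cong[OF refl], rule sum.swap)
  also have "\<dots> = (\<Sum>v\<in>V. \<Sum>i\<in>I. \<Sum>j\<in>J. G i j v)"
    by (rule sum.swap)
  finally show ?thesis .
qed

lemma sum_fun_apply': "(\<Sum>v\<in>t. F v) x = (\<Sum>v\<in>t. (F v x :: real))"
  by (induction t rule: infinite_finite_induct) auto

locale wsys =
  fixes V :: "'a set" and b :: "'a \<Rightarrow> 'a \<Rightarrow> real" and d :: "'a \<Rightarrow> real"
  assumes finV: "finite V"
    and symb: "\<And>v w. v \<in> V \<Longrightarrow> w \<in> V \<Longrightarrow> b v w = b w v"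
    and dge: "\<And>v. v \<in> V \<Longrightarrow> d v \<ge> 1"
begin

definition bil :: "('a \<Rightarrow> real) \<Rightarrow> ('a \<Rightarrow> real) \<Rightarrow> real" where
  "bil f g = (\<Sum>v\<in>V. \<Sum>w\<in>V. b v w * f v * g w)"
definition nb :: "('a \<Rightarrow> real) \<Rightarrow> ('a \<Rightarrow> real) \<Rightarrow> real" where
  "nb f g = (\<Sum>v\<in>V. d v * f v * g v)"
definition eig :: "real \<Rightarrow> ('a \<Rightarrow> real) \<Rightarrow> bool" where
  "eig m f \<longleftrightarrow> (\<forall>u\<in>V. (\<Sum>w\<in>V. b u w * f w) = m * d u * f u)"

lemma dnn: "v \<in> V \<Longrightarrow> 0 \<le> d v * (f v * f v)"
  using dge[of v] by (simp add: mult_nonneg_nonneg)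

lemma nb_nonneg: "nb f f \<ge> 0"
  unfolding nb_def using dnn
  by (intro sum_nonneg) (simp add: mult.assoc)

lemma nb_zero: assumes "nb f f = 0" "v \<in> V" shows "f v = 0"
proof -
  have "\<forall>x\<in>V. d x * f x * f x = 0"
    using assms(1) unfolding nb_def
    by (subst sum_nonneg_eq_0_iff[symmetric]) (use finV dnn in \<open>auto simp: mult.assoc\<close>)
  then have "d v * f v * f v = 0" using assms(2) by blast
  then show ?thesis using dge[OF assms(2)] by simp
qed

lemma nb_sym: "nb f g = nb g f"
  unfolding nb_def by (simp add: mult_ac)

lemma bil_sym: "bil f g = bil g f"
  unfolding bil_def
  by (subst sum.swap) (auto intro!: sum.cong simp: symb mult_ac)

lemma bil_expand:
  "bil (\<lambda>x. f x + t * g x) (\<lambda>x. f x + t * g x) = bil f f + 2*t*bil f g + t^2 * bil g g"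
proof -
  have "bil (\<lambda>x. f x + t * g x) (\<lambda>x. f x + t * g x) = bil f f + t * bil f g + t * bil g f + t^2 * bil g g"
    unfolding bil_def by (simp add: algebra_simps sum.distrib sum_distrib_left power2_eq_square)
  then show ?thesis using bil_sym[of g f] by simp
qed

lemma nb_expand:
  "nb (\<lambda>x. f x + t * g x) (\<lambda>x. f x + t * g x) = nb f f + 2*t*nb f g + t^2 * nb g g"
  unfolding nb_def by (simp add: algebra_simps sum.distrib sum_distrib_left power2_eq_square)

lemma bil_delta: assumes "u \<in> V" shows "bil f (\<lambda>x. if x = u then 1 else 0) = (\<Sum>v\<in>V. b v u * f v)"
proof -
  have "bil f (\<lambda>x. if x = u then 1 else 0) = (\<Sum>v\<in>V. \<Sum>w\<in>V. if w = u then b v w * f v else 0)"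
    unfolding bil_def by (intro sum.cong) auto
  also have "\<dots> = (\<Sum>v\<in>V. b v u * f v)" using assms finV by (simp add: sum.delta)
  finally show ?thesis .
qed

lemma nb_delta: assumes "u \<in> V" shows "nb f (\<lambda>x. if x = u then 1 else 0) = d u * f u"
proof -
  have "nb f (\<lambda>x. if x = u then 1 else 0) = (\<Sum>v\<in>V. if v = u then d v * f v else 0)"
    unfolding nb_def by (intro sum.cong) auto
  also have "\<dots> = d u * f u" using assms finV by (simp add: sum.delta)
  finally show ?thesis .
qed

lemma bil_eig: assumes "eig m f" shows "bil g f = m * nb g f"
proof -
  have "bil g f = (\<Sum>v\<in>V. g v * (\<Sum>w\<in>V. b v w * f w))"
    unfolding bil_def by (simp add: sum_distrib_left mult_ac)
  also have "\<dots> = (\<Sum>v\<in>V. g v * (m * d v * f v))"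
    using assms unfolding eig_def by (intro sum.cong) auto
  also have "\<dots> = m * nb g f" unfolding nb_def by (simp add: sum_distrib_left mult_ac)
  finally show ?thesis .
qed

lemma eig_orth: assumes "eig m f" "eig m' g" "m \<noteq> m'" shows "nb f g = 0"
proof -
  have "bil f g = m' * nb f g" using bil_eig[OF assms(2)] .
  moreover have "bil g f = m * nb g f" using bil_eig[OF assms(1)] .
  ultimately have "(m - m') * nb f g = 0" using bil_sym[of f g] nb_sym[of f g] by (simp add: algebra_simps)
  then show ?thesis using assms(3) by simp
qed

lemma variational:
  assumes "V \<noteq> {}"
  shows "\<exists>m z. (\<exists>v\<in>V. z v \<noteq> 0) \<and> eig m z \<and> (\<forall>y. bil y y \<ge> m * nb y y)"
proof -
  define S where "S = Pi UNIV (\<lambda>v. if v\<in>V then {-1..1::real} else {0}) \<inter> {z. nb z z = 1}"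
  have cont_bil: "continuous_on X (\<lambda>z. bil z z)" for X
    unfolding bil_def by (intro continuous_intros)
  have cont_nb: "continuous_on X (\<lambda>z. nb z z)" for X
    unfolding nb_def by (intro continuous_intros)
  have "compact S" unfolding S_def
    by (intro compact_Int_closed compact_box_fun closed_Collect_eq cont_nb continuous_on_const)
  obtain v0 where v0: "v0 \<in> V" using assms by blast
  define z1 where "z1 = (\<lambda>x. if x = v0 then 1 / sqrt (d v0) else 0)"
  have d0: "d v0 \<ge> 1" using dge v0 by simp
  have "nb z1 z1 = (\<Sum>v\<in>V. if v = v0 then d v0 * (1 / sqrt (d v0)) * (1 / sqrt (d v0)) else 0)"
    unfolding nb_def z1_def by (intro sum.cong) auto
  also have "\<dots> = 1" using v0 finV d0 by (simp add: sum.delta)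
  finally have "nb z1 z1 = 1" .
  moreover have "1 / sqrt (d v0) \<le> 1" using d0 by simp
  moreover have "-1 \<le> 1 / sqrt (d v0)"
  proof -
    have "0 \<le> 1 / sqrt (d v0)" using d0 by simp
    then show ?thesis by linarith
  qed
  ultimately have "z1 \<in> S" unfolding S_def using v0 by (auto simp: z1_def)
  then have "S \<noteq> {}" by blast
  obtain z0 where z0: "z0 \<in> S" "\<And>y. y \<in> S \<Longrightarrow> bil z0 z0 \<le> bil y y"
    using continuous_attains_inf[OF \<open>compact S\<close> \<open>S \<noteq> {}\<close> cont_bil] by blast
  define m where "m = bil z0 z0"
  have nz0: "nb z0 z0 = 1" using z0(1) unfolding S_def by blast
  have key: "bil y y \<ge> m * nb y y" for y
  proof (cases "nb y y = 0")
    case True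
    then have "\<forall>v\<in>V. y v = 0" using nb_zero by blast
    then have "bil y y = 0" unfolding bil_def by simp
    then show ?thesis using True by simp
  next
    case False
    then have pos: "nb y y > 0" using nb_nonneg[of y] by simp
    define c where "c = 1 / sqrt (nb y y)"
    define y' where "y' = (\<lambda>v. if v \<in> V then c * y v else 0)"
    have c2: "c * c = 1 / nb y y" unfolding c_def using pos
      by (simp add: real_sqrt_mult[symmetric])
    have "bil y' y' = (\<Sum>v\<in>V. \<Sum>w\<in>V. (c * c) * (b v w * y v * y w))"
      unfolding bil_def y'_def by (intro sum.cong) (auto simp: mult_ac)
    also have "\<dots> = (c * c) * bil y y" unfolding bil_def by (simp add: sum_distrib_left)
    finally have by': "bil y' y' = (c*c) * bil y y" .
    have "nb y' y' = (\<Sum>v\<in>V. (c * c) * (d v * y v * y v))"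
      unfolding nb_def y'_def by (intro sum.cong) (auto simp: mult_ac)
    also have "\<dots> = (c * c) * nb y y" unfolding nb_def by (simp add: sum_distrib_left)
    finally have "nb y' y' = 1" using c2 pos by simp
    moreover have "y' v \<in> {-1..1}" if "v \<in> V" for v
    proof -
      have "d v * y' v * y' v \<le> nb y' y'"
        unfolding nb_def using finV that dnn
        by (intro member_le_sum) (auto simp: mult.assoc)
      then have "d v * (y' v)^2 \<le> 1" using \<open>nb y' y' = 1\<close> by (simp add: power2_eq_square mult.assoc)
      moreover have "(y' v)^2 \<le> d v * (y' v)^2" using dge[OF that]
        by (metis mult_le_cancel_right1 zero_le_power2 order_trans order_refl mult.commute mult_right_mono)
      ultimately have "(y' v)^2 \<le> 1" by simp
      then show ?thesis using abs_square_le_1 by (auto simp: abs_le_iff)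
    qed
    ultimately have "y' \<in> S" unfolding S_def y'_def by auto
    then have "m \<le> (c*c) * bil y y" using z0(2)[of y'] by' unfolding m_def by simp
    then have "m \<le> bil y y / nb y y" using c2 by simp
    then show ?thesis using pos by (simp add: field_simps)
  qed
  have "eig m z0" unfolding eig_def
  proof
    fix u assume u: "u \<in> V"
    define g where "g = (\<lambda>x::'a. if x = u then (1::real) else 0)"
    define X where "X = bil z0 g - m * nb z0 g"
    define Y where "Y = bil g g - m * nb g g"
    have "0 \<le> 2*t*X + t^2*Y" for t
    proof -
      have "0 \<le> bil (\<lambda>x. z0 x + t * g x) (\<lambda>x. z0 x + t * g x) - m * nb (\<lambda>x. z0 x + t * g x) (\<lambda>x. z0 x + t * g x)"
        using key by simp
      also have "\<dots> = 2*t*X + t^2*Y"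
        unfolding bil_expand nb_expand X_def Y_def m_def using nz0 m_def by (simp add: algebra_simps)
      finally show ?thesis .
    qed
    then have "X = 0" by (rule quad_zero)
    then have "(\<Sum>v\<in>V. b v u * z0 v) = m * d u * z0 u"
      unfolding X_def g_def using u by (simp add: bil_delta nb_delta)
    moreover have "(\<Sum>v\<in>V. b v u * z0 v) = (\<Sum>w\<in>V. b u w * z0 w)"
      using u symb by (intro sum.cong) auto
    ultimately show "(\<Sum>w\<in>V. b u w * z0 w) = m * d u * z0 u" by simp
  qed
  moreover have "\<exists>v\<in>V. z0 v \<noteq> 0"
  proof (rule ccontr)
    assume "\<not> ?thesis"
    then have "nb z0 z0 = 0" unfolding nb_def by simp
    then show False using nz0 by simp
  qed
  ultimately show ?thesis using key by blast
qed

lemma hoffman: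
  fixes c :: "'a \<Rightarrow> nat"
  assumes col: "\<And>v. v \<in> V \<Longrightarrow> c v \<in> {1..k}"
    and zero: "\<And>v w. v \<in> V \<Longrightarrow> w \<in> V \<Longrightarrow> c v = c w \<Longrightarrow> b v w = 0"
    and x: "bil x x = M * nb x x" "nb x x > 0"
    and low: "\<And>y. bil y y \<ge> m * nb y y"
  shows "M + (real k - 1) * m \<le> 0"
proof -
  define I where "I = {1..k}"
  define ind where "ind i v = (if c v = i then 1 else (0::real))" for i v
  define z where "z i j v = x v * (ind i v - ind j v)" for i j v
  define K where "K v w = (\<Sum>i\<in>I. \<Sum>j\<in>I. (ind i v - ind j v) * (ind i w - ind j w))" for v w
  have s1: "(\<Sum>i\<in>I. ind i v) = 1" if "v \<in> V" for v
  proof -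
    have "c v \<in> I" using col[OF that] unfolding I_def .
    moreover have "finite I" unfolding I_def by simp
    ultimately show ?thesis unfolding ind_def using sum.delta'[of I "c v" "\<lambda>_. (1::real)"] by simp
  qed
  have s2: "(\<Sum>i\<in>I. ind i v * ind i w) = (if c v = c w then 1 else 0)" if "v \<in> V" for v w
  proof -
    have "(\<Sum>i\<in>I. ind i v * ind i w) = (\<Sum>i\<in>I. if c v = i then (if c w = c v then 1 else 0) else 0)"
      unfolding ind_def by (intro sum.cong) auto
    also have "\<dots> = (if c v = c w then 1 else 0)"
    proof -
      have "c v \<in> I" using col[OF that] unfolding I_def .
      moreover have "finite I" unfolding I_def by simp
      ultimately show ?thesis using sum.delta'[of I "c v" "\<lambda>_. (if c w = c v then 1 else 0::real)"] by auto
    qed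
    finally show ?thesis .
  qed
  have cI: "card I = k" unfolding I_def by simp
  have fI: "finite I" unfolding I_def by simp
  have Kval: "K v w = 2 * real k * (if c v = c w then 1 else 0) - 2" if "v \<in> V" "w \<in> V" for v w
    unfolding K_def double_sum_ident[OF fI] cI s1[OF that(1)] s1[OF that(2)] s2[OF that(1)] by simp
  have B: "(\<Sum>i\<in>I. \<Sum>j\<in>I. bil (z i j) (z i j)) = (\<Sum>v\<in>V. \<Sum>w\<in>V. b v w * x v * x w * K v w)"
  proof -
    have "(\<Sum>i\<in>I. \<Sum>j\<in>I. bil (z i j) (z i j)) =
      (\<Sum>i\<in>I. \<Sum>j\<in>I. \<Sum>v\<in>V. \<Sum>w\<in>V. b v w * x v * x w * ((ind i v - ind j v) * (ind i w - ind j w)))"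
      unfolding bil_def z_def by (simp add: mult_ac)
    also have "\<dots> = (\<Sum>v\<in>V. \<Sum>w\<in>V. \<Sum>i\<in>I. \<Sum>j\<in>I. b v w * x v * x w * ((ind i v - ind j v) * (ind i w - ind j w)))"
      by (rule swap4)
    also have "\<dots> = (\<Sum>v\<in>V. \<Sum>w\<in>V. b v w * x v * x w * K v w)"
      unfolding K_def by (simp add: sum_distrib_left)
    finally show ?thesis .
  qed
  also have "\<dots> = (\<Sum>v\<in>V. \<Sum>w\<in>V. -2 * (b v w * x v * x w))"
    by (intro sum.cong refl) (auto simp: Kval zero)
  also have "\<dots> = -2 * bil x x" unfolding bil_def by (simp add: sum_distrib_left)
  finally have B': "(\<Sum>i\<in>I. \<Sum>j\<in>I. bil (z i j) (z i j)) = -2 * bil x x" .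
  have N: "(\<Sum>i\<in>I. \<Sum>j\<in>I. nb (z i j) (z i j)) = (\<Sum>v\<in>V. d v * x v * x v * K v v)"
  proof -
    have "(\<Sum>i\<in>I. \<Sum>j\<in>I. nb (z i j) (z i j)) =
      (\<Sum>i\<in>I. \<Sum>j\<in>I. \<Sum>v\<in>V. d v * x v * x v * ((ind i v - ind j v) * (ind i v - ind j v)))"
      unfolding nb_def z_def by (simp add: mult_ac)
    also have "\<dots> = (\<Sum>v\<in>V. \<Sum>i\<in>I. \<Sum>j\<in>I. d v * x v * x v * ((ind i v - ind j v) * (ind i v - ind j v)))"
      by (rule swap3)
    also have "\<dots> = (\<Sum>v\<in>V. d v * x v * x v * K v v)"
      unfolding K_def by (simp add: sum_distrib_left)
    finally show ?thesis .
  qed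
  also have "\<dots> = (\<Sum>v\<in>V. (2 * real k - 2) * (d v * x v * x v))"
    by (intro sum.cong refl) (auto simp: Kval)
  also have "\<dots> = (2 * real k - 2) * nb x x" unfolding nb_def by (simp add: sum_distrib_left)
  finally have N': "(\<Sum>i\<in>I. \<Sum>j\<in>I. nb (z i j) (z i j)) = (2 * real k - 2) * nb x x" .
  have "0 \<le> (\<Sum>i\<in>I. \<Sum>j\<in>I. bil (z i j) (z i j) - m * nb (z i j) (z i j))"
    using low by (intro sum_nonneg) (simp add: algebra_simps)
  also have "\<dots> = (\<Sum>i\<in>I. \<Sum>j\<in>I. bil (z i j) (z i j)) - m * (\<Sum>i\<in>I. \<Sum>j\<in>I. nb (z i j) (z i j))"
    by (simp add: sum_subtractf sum_distrib_left)
  also have "\<dots> = -2 * nb x x * (M + (real k - 1) * m)"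
    unfolding B' N' x(1) by (simp add: algebra_simps)
  finally have "0 \<le> -2 * nb x x * (M + (real k - 1) * m)" .
  then show ?thesis using x(2) by (simp add: mult_le_0_iff zero_le_mult_iff)
qed


definition evals :: "real set" where
  "evals = {m. \<exists>f. (\<exists>v\<in>V. f v \<noteq> 0) \<and> eig m f}"

lemma card_evals_bound:
  assumes T: "T \<subseteq> evals" "finite T"
  shows "card T \<le> card V"
proof -
  interpret vs: vector_space "\<lambda>(c::real) (f::'a\<Rightarrow>real) x. c * f x"
    by unfold_locales (simp_all add: fun_eq_iff distrib_left distrib_right)
  define F where "F m = (SOME f. (\<exists>v\<in>V. f v \<noteq> 0) \<and> eig m f)" for m
  define G where "G m = (\<lambda>x. if x \<in> V then F m x else 0)" for m
  have FG: "(\<exists>v\<in>V. G m v \<noteq> 0) \<and> eig m (G m)" if "m \<in> T" for m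
  proof -
    have "\<exists>f. (\<exists>v\<in>V. f v \<noteq> 0) \<and> eig m f" using T that unfolding evals_def by blast
    then have "(\<exists>v\<in>V. F m v \<noteq> 0) \<and> eig m (F m)" unfolding F_def by (rule someI_ex)
    then show ?thesis unfolding G_def eig_def by auto
  qed
  have Gsupp: "G m x = 0" if "x \<notin> V" for m x using that unfolding G_def by simp
  have Gpos: "nb (G m) (G m) > 0" if "m \<in> T" for m
  proof -
    have "nb (G m) (G m) \<noteq> 0" using FG[OF that] nb_zero by blast
    then show ?thesis using nb_nonneg[of "G m"] by simp
  qed
  have Gorth: "nb (G m) (G m') = 0" if "m \<in> T" "m' \<in> T" "m \<noteq> m'" for m m'
    using eig_orth[of m "G m" m' "G m'"] FG[OF that(1)] FG[OF that(2)] that(3) by blast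
  have inj: "inj_on G T"
  proof
    fix m m' assume h: "m \<in> T" "m' \<in> T" "G m = G m'"
    show "m = m'"
    proof (rule ccontr)
      assume "m \<noteq> m'"
      then have "nb (G m) (G m') = 0" using Gorth h by blast
      then have "nb (G m) (G m) = 0" using h(3) by simp
      then show False using Gpos[OF h(1)] by simp
    qed
  qed
  have ind: "vs.independent (G ` T)"
  proof
    assume "vs.dependent (G ` T)"
    then obtain t u where t: "finite t" "t \<subseteq> G ` T" "(\<Sum>v\<in>t. (\<lambda>x. u v * v x)) = 0" "\<exists>v\<in>t. u v \<noteq> 0"
      unfolding vs.dependent_explicit by blast
    obtain h where h: "h \<in> t" "u h \<noteq> 0" using t(4) by blast
    obtain mh where mh: "mh \<in> T" "h = G mh" using h t(2) by blast
    have "0 = nb h (\<Sum>v\<in>t. (\<lambda>x. u v * v x))" using t(3) unfolding nb_def by simp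
    also have "\<dots> = (\<Sum>v\<in>V. \<Sum>va\<in>t. u va * (d v * h v * va v))"
      unfolding nb_def sum_fun_apply' by (simp add: sum_distrib_left mult_ac)
    also have "\<dots> = (\<Sum>va\<in>t. \<Sum>v\<in>V. u va * (d v * h v * va v))" by (rule sum.swap)
    also have "\<dots> = (\<Sum>v\<in>t. u v * nb h v)" unfolding nb_def by (simp only: sum_distrib_left)
    also have "\<dots> = (\<Sum>v\<in>t. if v = h then u h * nb h h else 0)"
    proof (intro sum.cong refl)
      fix v assume v: "v \<in> t"
      then obtain mv where mv: "mv \<in> T" "v = G mv" using t(2) by blast
      show "u v * nb h v = (if v = h then u h * nb h h else 0)"
      proof (cases "v = h")
        case False
        then have "mv \<noteq> mh" using mh(2) mv(2) by auto
        then have "nb h v = 0" using Gorth[OF mh(1) mv(1)] mh(2) mv(2) by simp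
        then show ?thesis using False by simp
      qed simp
    qed
    also have "\<dots> = u h * nb h h" using t(1) h(1) by (simp add: sum.delta')
    finally have "u h * nb h h = 0" by simp
    then show False using h(2) Gpos[OF mh(1)] mh(2) by simp
  qed
  have sp: "G ` T \<subseteq> vs.span ((\<lambda>u. (\<lambda>x. if x = u then 1 else 0)) ` V)"
  proof
    fix g assume "g \<in> G ` T"
    then obtain m where m: "g = G m" by blast
    have "g = (\<Sum>u\<in>V. (\<lambda>x. g u * (if x = u then 1 else 0)))"
    proof
      fix x
      have "(\<Sum>u\<in>V. g u * (if x = u then 1 else 0)) = (\<Sum>u\<in>V. if x = u then g u else 0)"
        by (rule sum.cong) simp_all
      also have "\<dots> = (if x \<in> V then g x else 0)" using finV by (rule sum.delta')
      also have "\<dots> = g x" using m Gsupp by auto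
      finally show "g x = (\<Sum>u\<in>V. (\<lambda>x. g u * (if x = u then 1 else 0))) x"
        unfolding sum_fun_apply' by simp
    qed
    also have "\<dots> \<in> vs.span ((\<lambda>u. (\<lambda>x. if x = u then 1 else 0)) ` V)"
    proof (rule vs.span_sum)
      fix u assume "u \<in> V"
      then have "(\<lambda>x. if x = u then 1 else 0) \<in> vs.span ((\<lambda>u. (\<lambda>x. if x = u then 1 else 0)) ` V)"
        by (intro vs.span_base imageI)
      then show "(\<lambda>x. g u * (if x = u then 1 else 0)) \<in> vs.span ((\<lambda>u. (\<lambda>x. if x = u then 1 else 0)) ` V)"
        by (rule vs.span_scale)
    qed
    finally show "g \<in> vs.span ((\<lambda>u. (\<lambda>x. if x = u then 1 else 0)) ` V)" .
  qed
  have "card (G ` T) \<le> card ((\<lambda>u. (\<lambda>x. if x = u then 1 else (0::real))) ` V)"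
    using vs.independent_span_bound[OF finite_imageI[OF finV] ind sp] by blast
  also have "\<dots> \<le> card V" by (rule card_image_le[OF finV])
  finally show ?thesis using card_image[OF inj] by simp
qed

lemma finite_evals: "finite evals"
proof (rule ccontr)
  assume "infinite evals"
  then obtain T where T: "finite T" "card T = Suc (card V)" "T \<subseteq> evals"
    using infinite_arbitrarily_large by blast
  have "card T \<le> card V" using card_evals_bound[OF T(3) T(1)] .
  then show False using \<open>card T = Suc (card V)\<close> by simp
qed

end

context wsys begin
lemma bil_dd: assumes "p \<in> V" "u \<in> V"
  shows "bil (\<lambda>x. if x = p then 1 else 0) (\<lambda>x. if x = u then 1 else 0) = b p u"
proof -
  have "bil (\<lambda>x. if x = p then 1 else 0) (\<lambda>x. if x = u then 1 else 0) = (\<Sum>v\<in>V. if v = p then b v u else 0)"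
    unfolding bil_delta[OF assms(2)] by (rule sum.cong) simp_all
  also have "\<dots> = b p u" using finV assms(1) by (simp add: sum.delta)
  finally show ?thesis .
qed
end

lemma adj_sym: "adj E phi v w = adj E phi w v"
proof -
  have 1: "{e \<in> E. v \<in> e \<and> w \<in> e \<and> phi v e = - phi w e} = {e \<in> E. w \<in> e \<and> v \<in> e \<and> phi w e = - phi v e}"
    by auto
  have 2: "{e \<in> E. v \<in> e \<and> w \<in> e \<and> phi v e = phi w e} = {e \<in> E. w \<in> e \<and> v \<in> e \<and> phi w e = phi v e}"
    by auto
  show ?thesis unfolding adj_def 1 2 by auto
qed

lemma adj_nz: assumes "adj E phi v w \<noteq> 0" shows "v \<noteq> w" "\<exists>e\<in>E. v \<in> e \<and> w \<in> e"
proof -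
  show "v \<noteq> w" using assms unfolding adj_def by auto
  show "\<exists>e\<in>E. v \<in> e \<and> w \<in> e"
  proof (rule ccontr)
    assume "\<not> ?thesis"
    then have eq1: "{e \<in> E. v \<in> e \<and> w \<in> e \<and> phi v e = - phi w e} = {}"
      and eq2: "{e \<in> E. v \<in> e \<and> w \<in> e \<and> phi v e = phi w e} = {}" by auto
    show False using assms unfolding adj_def eq1 eq2 by (auto split: if_splits)
  qed
qed

lemma coloring_exists:
  assumes "finite V" "E \<subseteq> Pow V"
  shows "\<exists>k c. strong_coloring V E k c"
proof -
  obtain f :: "'a \<Rightarrow> nat" and n where f: "f ` V = {i. i < n}" "inj_on f V"
    using finite_imp_inj_to_nat_seg[OF assms(1)] by blast
  have "strong_coloring V E n (\<lambda>v. f v + 1)"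
    unfolding strong_coloring_def
  proof (intro conjI ballI impI)
    fix v assume "v \<in> V"
    then have "f v \<in> f ` V" by (rule imageI)
    then have "f v < n" using f(1) by simp
    then show "f v + 1 \<in> {1..n}" by simp
  next
    fix e v w assume "e \<in> E" "v \<in> e" "w \<in> e" "v \<noteq> w"
    then have "v \<in> V" "w \<in> V" using assms(2) by auto
    then have "f v \<noteq> f w" using f(2) \<open>v \<noteq> w\<close> by (meson inj_onD)
    then show "f v + 1 \<noteq> f w + 1" by simp
  qed
  then show ?thesis by blast
qed

theorem mainTheorem1:
  fixes V :: "'a set" and E :: "'a set set" and phi :: "'a \<Rightarrow> 'a set \<Rightarrow> int"
  assumes "oriented_hypergraph V E phi"
    and "\<exists>v\<in>V. \<exists>w\<in>V. adj E phi v w \<noteq> 0"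
  shows "lambda_min V E phi < 1 \<and> 1 < lambda_max V E phi \<and>
         real (chromatic_number V E) \<ge>
           (lambda_max V E phi - lambda_min V E phi) /
           min (lambda_max V E phi - 1) (1 - lambda_min V E phi)"
proof -
  have finV: "finite V" and EV: "E \<subseteq> Pow V"
    using assms(1) unfolding oriented_hypergraph_def by auto
  have degV: "\<And>v. v \<in> V \<Longrightarrow> deg E v \<ge> 1"
    using assms(1) unfolding oriented_hypergraph_def by blast
  define a where "a v w = real_of_int (adj E phi v w)" for v w
  define d where "d v = real (deg E v)" for v
  have dge: "1 \<le> d v" if "v \<in> V" for v using degV[OF that] unfolding d_def by simp
  interpret P: wsys V a d
    by unfold_locales (auto simp: finV a_def adj_sym[of E phi] dge)
  interpret N: wsys V "\<lambda>v w. - a v w" d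
    by unfold_locales (auto simp: finV a_def adj_sym[of E phi] dge)
  have Nbil: "N.bil f g = - P.bil f g" for f g
    unfolding N.bil_def P.bil_def by (simp add: sum_negf)
  have Nnb: "N.nb f g = P.nb f g" for f g
    unfolding N.nb_def P.nb_def ..
  have Neig: "N.eig m f \<longleftrightarrow> P.eig (-m) f" for m f
  proof -
    have h: "(\<Sum>w\<in>V. - a u w * f w) = m * d u * f u \<longleftrightarrow> (\<Sum>w\<in>V. a u w * f w) = - m * d u * f u" for u
    proof -
      have e: "(\<Sum>w\<in>V. - a u w * f w) = - (\<Sum>w\<in>V. a u w * f w)" by (simp add: sum_negf)
      show ?thesis unfolding e by (simp only: mult_minus_left) auto
    qed
    show ?thesis unfolding N.eig_def P.eig_def using h by blast
  qed
  obtain v0 w0 where vw: "v0 \<in> V" "w0 \<in> V" "adj E phi v0 w0 \<noteq> 0" using assms(2) by blast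
  have Vne: "V \<noteq> {}" using vw by blast
  define eigs where "eigs = laplacian_eigenvalues V E phi"
  have eig_iff: "\<mu> \<in> eigs \<longleftrightarrow> 1 - \<mu> \<in> P.evals" for \<mu>
  proof -
    have "(\<forall>v\<in>V. norm_laplacian V E phi f v = \<mu> * f v) \<longleftrightarrow> P.eig (1 - \<mu>) f" for f
    proof -
      have "norm_laplacian V E phi f v = \<mu> * f v \<longleftrightarrow> (\<Sum>w\<in>V. a v w * f w) = (1 - \<mu>) * d v * f v"
        if "v \<in> V" for v
      proof -
        have dp: "d v > 0" using degV[OF that] unfolding d_def by simp
        define S where "S = (\<Sum>w\<in>V. a v w * f w)"
        have "norm_laplacian V E phi f v = f v - 1 / d v * S"
          unfolding norm_laplacian_def S_def a_def d_def ..
        moreover have "d v * (f v - 1 / d v * S) = d v * f v - S" using dp by (simp add: field_simps)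
        moreover have "(f v - 1 / d v * S = \<mu> * f v) \<longleftrightarrow> d v * (f v - 1 / d v * S) = d v * (\<mu> * f v)"
          using dp by simp
        ultimately show ?thesis unfolding S_def[symmetric] by (auto simp: algebra_simps)
      qed
      then show ?thesis unfolding P.eig_def by auto
    qed
    then show ?thesis unfolding eigs_def laplacian_eigenvalues_def P.evals_def by auto
  qed
  have eigs_img: "eigs = (\<lambda>m. 1 - m) ` P.evals"
  proof (rule set_eqI)
    fix \<mu> show "\<mu> \<in> eigs \<longleftrightarrow> \<mu> \<in> (\<lambda>m. 1 - m) ` P.evals"
    proof
      assume "\<mu> \<in> eigs"
      then have "1 - \<mu> \<in> P.evals" using eig_iff by blast
      moreover have "\<mu> = 1 - (1 - \<mu>)" by simp
      ultimately show "\<mu> \<in> (\<lambda>m. 1 - m) ` P.evals" by (rule rev_image_eqI)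
    next
      assume "\<mu> \<in> (\<lambda>m. 1 - m) ` P.evals"
      then obtain m where "m \<in> P.evals" "\<mu> = 1 - m" by blast
      then show "\<mu> \<in> eigs" using eig_iff[of \<mu>] by simp
    qed
  qed
  have fin: "finite eigs" unfolding eigs_img using P.finite_evals by simp
  obtain m0 z0 where mz0: "\<exists>v\<in>V. z0 v \<noteq> 0" "P.eig m0 z0" "\<And>y. P.bil y y \<ge> m0 * P.nb y y"
    using P.variational[OF Vne] by blast
  obtain m1 z1 where mz1: "\<exists>v\<in>V. z1 v \<noteq> 0" "N.eig m1 z1" "\<And>y. N.bil y y \<ge> m1 * N.nb y y"
    using N.variational[OF Vne] by blast
  have e0: "1 - m0 \<in> eigs" using eig_iff mz0 unfolding P.evals_def by auto
  have e1: "1 + m1 \<in> eigs" using eig_iff mz1(1,2) Neig unfolding P.evals_def by auto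
  have ne: "eigs \<noteq> {}" using e0 by blast
  define l1 where "l1 = lambda_min V E phi"
  define lN where "lN = lambda_max V E phi"
  have l1in: "l1 \<in> eigs" unfolding l1_def lambda_min_def eigs_def[symmetric] using fin ne by simp
  have lNin: "lN \<in> eigs" unfolding lN_def lambda_max_def eigs_def[symmetric] using fin ne by simp
  have l1le: "l1 \<le> 1 + m1" unfolding l1_def lambda_min_def eigs_def[symmetric] using fin e1 by simp
  have lNge: "1 - m0 \<le> lN" unfolding lN_def lambda_max_def eigs_def[symmetric] using fin e0 by simp
  have low: "P.bil y y \<ge> (1 - lN) * P.nb y y" for y
  proof -
    have "(1 - lN) * P.nb y y \<le> m0 * P.nb y y"
      using lNge P.nb_nonneg[of y] by (intro mult_right_mono) auto
    then show ?thesis using mz0(3)[of y] by linarith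
  qed
  have up: "P.bil y y \<le> (1 - l1) * P.nb y y" for y
  proof -
    have "-m1 * P.nb y y \<le> (1 - l1) * P.nb y y"
      using l1le P.nb_nonneg[of y] by (intro mult_right_mono) auto
    then show ?thesis using mz1(3)[of y] Nbil Nnb by simp
  qed
  obtain x1 where x1: "\<exists>v\<in>V. x1 v \<noteq> 0" "P.eig (1 - l1) x1"
    using l1in eig_iff unfolding P.evals_def by blast
  obtain xN where xN: "\<exists>v\<in>V. xN v \<noteq> 0" "P.eig (1 - lN) xN"
    using lNin eig_iff unfolding P.evals_def by blast
  have pos: "P.nb x x > 0" if "\<exists>v\<in>V. x v \<noteq> 0" for x
  proof -
    have "P.nb x x \<noteq> 0" using that P.nb_zero by blast
    then show ?thesis using P.nb_nonneg[of x] by simp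
  qed
  define dv where "dv = (\<lambda>x. if x = v0 then (1::real) else 0)"
  define dw where "dw = (\<lambda>x. if x = w0 then (1::real) else 0)"
  have vne: "v0 \<noteq> w0" using adj_nz(1)[OF vw(3)] .
  have avv: "a v v = 0" for v unfolding a_def adj_def by simp
  have bt: "P.bil (\<lambda>x. dv x + t * dw x) (\<lambda>x. dv x + t * dw x) = 2 * t * a v0 w0" for t
    unfolding P.bil_expand dv_def dw_def using P.bil_dd vw(1,2) avv by simp
  have a0: "a v0 w0 \<noteq> 0" using vw(3) unfolding a_def by simp
  have "\<exists>y. P.bil y y > 0"
  proof (cases "a v0 w0 > 0")
    case True then show ?thesis using bt[of 1] by (intro exI[of _ "\<lambda>x. dv x + 1 * dw x"]) simp
  next
    case False then show ?thesis using bt[of "-1"] a0 by (intro exI[of _ "\<lambda>x. dv x + (-1) * dw x"]) simp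
  qed
  then obtain yp where yp: "P.bil yp yp > 0" by blast
  have "\<exists>y. P.bil y y < 0"
  proof (cases "a v0 w0 > 0")
    case True then show ?thesis using bt[of "-1"] by (intro exI[of _ "\<lambda>x. dv x + (-1) * dw x"]) simp
  next
    case False then show ?thesis using bt[of 1] a0 by (intro exI[of _ "\<lambda>x. dv x + 1 * dw x"]) simp
  qed
  then obtain yn where yn: "P.bil yn yn < 0" by blast
  have M: "1 - l1 > 0"
  proof (rule ccontr)
    assume "\<not> ?thesis"
    then have "(1 - l1) * P.nb yp yp \<le> 0" using P.nb_nonneg[of yp] by (simp add: mult_nonpos_nonneg)
    then show False using up[of yp] yp by linarith
  qed
  have m: "1 - lN < 0"
  proof (rule ccontr)
    assume "\<not> ?thesis"
    then have "(1 - lN) * P.nb yn yn \<ge> 0" using P.nb_nonneg[of yn] by simp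
    then show False using low[of yn] yn by linarith
  qed
  define k where "k = chromatic_number V E"
  obtain c where c: "strong_coloring V E k c"
  proof -
    have "\<exists>c. strong_coloring V E k c"
      unfolding k_def chromatic_number_def using coloring_exists[OF finV EV]
      by (rule LeastI_ex)
    then show ?thesis using that by blast
  qed
  have col: "c v \<in> {1..k}" if "v \<in> V" for v using c that unfolding strong_coloring_def by blast
  have zero: "a v w = 0" if "v \<in> V" "w \<in> V" "c v = c w" for v w
  proof (rule ccontr)
    assume "a v w \<noteq> 0"
    then have nz: "adj E phi v w \<noteq> 0" unfolding a_def by simp
    obtain e where e: "e \<in> E" "v \<in> e" "w \<in> e" using adj_nz(2)[OF nz] by blast
    have "c v \<noteq> c w" using c e adj_nz(1)[OF nz] unfolding strong_coloring_def by blast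
    then show False using that by simp
  qed
  have H1: "(1 - l1) + (real k - 1) * (1 - lN) \<le> 0"
    by (rule P.hoffman[of c k x1 "1 - l1" "1 - lN"])
       (use col zero P.bil_eig[OF x1(2)] pos[OF x1(1)] low in auto)
  have H2: "-(1 - lN) + (real k - 1) * (-(1 - l1)) \<le> 0"
  proof (rule N.hoffman[of c k xN "-(1 - lN)" "-(1 - l1)"])
    show "\<And>v. v \<in> V \<Longrightarrow> c v \<in> {1..k}" using col by blast
    show "\<And>v w. v \<in> V \<Longrightarrow> w \<in> V \<Longrightarrow> c v = c w \<Longrightarrow> - a v w = 0" using zero by simp
    show "N.bil xN xN = - (1 - lN) * N.nb xN xN" using P.bil_eig[OF xN(2)] Nbil Nnb by (simp add: algebra_simps)
    show "0 < N.nb xN xN" using pos[OF xN(1)] Nnb by simp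
    show "- (1 - l1) * N.nb y y \<le> N.bil y y" for y using up[of y] Nbil Nnb by (simp add: algebra_simps)
  qed
  have final: "real k \<ge> (lN - l1) / min (lN - 1) (1 - l1)"
  proof (cases "lN - 1 \<le> 1 - l1")
    case True
    then have mn: "min (lN - 1) (1 - l1) = lN - 1" by simp
    have "lN - l1 \<le> real k * (lN - 1)" using H1 by (simp add: algebra_simps)
    then show ?thesis unfolding mn using m by (simp add: pos_divide_le_eq mult.commute)
  next
    case False
    then have mn: "min (lN - 1) (1 - l1) = 1 - l1" by simp
    have "lN - l1 \<le> real k * (1 - l1)" using H2 by (simp add: algebra_simps)
    then show ?thesis unfolding mn using M by (simp add: pos_divide_le_eq mult.commute)
  qed
  show ?thesis using M m final unfolding l1_def lN_def k_def by simp
qed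

end
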